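(* Let $I=[0,1]$ and $f_{1,\infty}$ an $m$-periodic sequence of continuous self-maps of $I$. If $(I,f_{1,\infty})$ is weakly mixing, then it is ergodically sensitive and syndetically sensitive.
   Context: $m$-periodic: $f_{n+m}=f_n$ for all $n$. Write $f_1^n=f_n\circ\cdots\circ f_1$. Weakly mixing: for all non-empty open $U_1,U_2,V_1,V_2$ there is $n$ with $f_1^n(U_i)\cap V_i\ne\emptyset$, $i=1,2$. For open $U$ and $\delta>0$, $N_{f_{1,\infty}}(U,\delta)=\{n\in\mathbb{N}:\exists x,y\in U,\ |f_1^n(x)-f_1^n(y)|>\delta\}$. A set $F\subseteq\mathbb{N}$ is syndetic if there is $a$ with $\{i,\dots,i+a\}\cap F\ne\emptyset$ for all $i$; upper density $\overline{d}(S)=\limsup_{n\to\infty}\frac1n|S\cap\{0,\dots,n-1\}|$. Syndetically (resp. ergodically) sensitive: there is $\delta>0$ with $N_{f_{1,\infty}}(U,\delta)$ syndetic (resp. of positive upper density) for every non-empty open $U$. *)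

theory Defs
  imports "HOL-Analysis.Analysis" "HOL-Library.Liminf_Limsup"
begin

abbreviation unitI :: "real set" where "unitI \<equiv> {0..1}"

primrec iter_comp :: "(nat \<Rightarrow> real \<Rightarrow> real) \<Rightarrow> nat \<Rightarrow> real \<Rightarrow> real" where
  "iter_comp f 0 = id"
| "iter_comp f (Suc n) = f (Suc n) \<circ> iter_comp f n"

text \<open>A sequence f_1, f_2, ... of continuous self-maps of I (f 0 unused).\<close>
definition cont_selfmap_seq :: "(nat \<Rightarrow> real \<Rightarrow> real) \<Rightarrow> bool" where
  "cont_selfmap_seq f \<longleftrightarrow>
     (\<forall>n\<ge>1. continuous_on unitI (f n) \<and> f n ` unitI \<subseteq> unitI)"

definition periodic_seq :: "nat \<Rightarrow> (nat \<Rightarrow> real \<Rightarrow> real) \<Rightarrow> bool" where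
  "periodic_seq m f \<longleftrightarrow> m \<ge> 1 \<and> (\<forall>n\<ge>1. f (n + m) = f n)"

definition nonempty_open_I :: "real set \<Rightarrow> bool" where
  "nonempty_open_I U \<longleftrightarrow> openin (top_of_set unitI) U \<and> U \<noteq> {}"

definition weakly_mixing :: "(nat \<Rightarrow> real \<Rightarrow> real) \<Rightarrow> bool" where
  "weakly_mixing f \<longleftrightarrow>
     (\<forall>U1 U2 V1 V2. nonempty_open_I U1 \<and> nonempty_open_I U2 \<and>
        nonempty_open_I V1 \<and> nonempty_open_I V2 \<longrightarrow>
        (\<exists>n\<ge>1. iter_comp f n ` U1 \<inter> V1 \<noteq> {} \<and> iter_comp f n ` U2 \<inter> V2 \<noteq> {}))"

definition sens_set :: "(nat \<Rightarrow> real \<Rightarrow> real) \<Rightarrow> real set \<Rightarrow> real \<Rightarrow> nat set" where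
  "sens_set f U \<delta> = {n. \<exists>x\<in>U. \<exists>y\<in>U. \<bar>iter_comp f n x - iter_comp f n y\<bar> > \<delta>}"

definition syndetic :: "nat set \<Rightarrow> bool" where
  "syndetic F \<longleftrightarrow> (\<exists>a. \<forall>i. {i..i+a} \<inter> F \<noteq> {})"

definition upper_density :: "nat set \<Rightarrow> ereal" where
  "upper_density S = limsup (\<lambda>n. ereal (real (card (S \<inter> {0..<n})) / real n))"

definition syndetically_sensitive :: "(nat \<Rightarrow> real \<Rightarrow> real) \<Rightarrow> bool" where
  "syndetically_sensitive f \<longleftrightarrow>
     (\<exists>\<delta>>0. \<forall>U. nonempty_open_I U \<longrightarrow> syndetic (sens_set f U \<delta>))"

definition ergodically_sensitive :: "(nat \<Rightarrow> real \<Rightarrow> real) \<Rightarrow> bool" where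
  "ergodically_sensitive f \<longleftrightarrow>
     (\<exists>\<delta>>0. \<forall>U. nonempty_open_I U \<longrightarrow> upper_density (sens_set f U \<delta>) > 0)"

end

theory Submission
  imports Defs
begin

lemma iter_cont:
  assumes "cont_selfmap_seq f"
  shows "continuous_on unitI (iter_comp f n) \<and> iter_comp f n ` unitI \<subseteq> unitI"
proof (induction n)
  case 0
  then show ?case by (simp add: continuous_on_id)
next
  case (Suc n)
  have f: "continuous_on unitI (f (Suc n))" "f (Suc n) ` unitI \<subseteq> unitI"
    using assms unfolding cont_selfmap_seq_def by auto
  have "continuous_on unitI (f (Suc n) \<circ> iter_comp f n)"
    using Suc f by (meson continuous_on_compose continuous_on_subset)
  moreover have "(f (Suc n) \<circ> iter_comp f n) ` unitI \<subseteq> unitI"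
    using Suc f by (auto simp: image_subset_iff)
  ultimately show ?case by simp
qed

lemma iter_add:
  "iter_comp f (n + j) = iter_comp (\<lambda>k. f (n + k)) j \<circ> iter_comp f n"
  by (induction j) auto

lemma iter_cong:
  assumes "\<And>k. k \<ge> 1 \<Longrightarrow> g k = h k"
  shows "iter_comp g j = iter_comp h j"
  using assms by (induction j) auto

lemma periodic_mult:
  assumes "periodic_seq m f" "x \<ge> 1"
  shows "f (x + t * m) = f x"
proof (induction t)
  case 0 then show ?case by simp
next
  case (Suc t)
  have "f (x + Suc t * m) = f ((x + t * m) + m)" by (simp add: algebra_simps)
  also have "\<dots> = f (x + t * m)" using assms unfolding periodic_seq_def by auto
  finally show ?case using Suc by simp
qed

lemma iter_shift_mod:
  assumes "periodic_seq m f"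
  shows "iter_comp (\<lambda>k. f (n + k)) j = iter_comp (\<lambda>k. f (n mod m + k)) j"
proof (rule iter_cong)
  fix k :: nat assume "k \<ge> 1"
  have "n + k = (n mod m + k) + (n div m) * m" by simp
  then show "f (n + k) = f (n mod m + k)"
    using periodic_mult[OF assms, of "n mod m + k" "n div m"] \<open>k \<ge> 1\<close> by simp
qed

lemma openin_small:
  assumes "cont_selfmap_seq f" "u \<in> unitI"
  shows "openin (top_of_set unitI) {x\<in>unitI. \<forall>k\<le>N. \<bar>iter_comp f k x - iter_comp f k u\<bar> < 1/6}"
proof (induction N)
  case 0
  have "{x\<in>unitI. \<forall>k\<le>0. \<bar>iter_comp f k x - iter_comp f k u\<bar> < 1/6}
        = unitI \<inter> iter_comp f 0 -` ball (iter_comp f 0 u) (1/6)"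
    by (auto simp: dist_real_def abs_minus_commute)
  then show ?case
    using continuous_openin_preimage_gen[OF conjunct1[OF iter_cont[OF assms(1), of 0]], of "ball (iter_comp f 0 u) (1/6)"]
    by simp
next
  case (Suc N)
  have "{x\<in>unitI. \<forall>k\<le>Suc N. \<bar>iter_comp f k x - iter_comp f k u\<bar> < 1/6}
        = {x\<in>unitI. \<forall>k\<le>N. \<bar>iter_comp f k x - iter_comp f k u\<bar> < 1/6}
          \<inter> (unitI \<inter> iter_comp f (Suc N) -` ball (iter_comp f (Suc N) u) (1/6))"
    by (auto simp: dist_real_def abs_minus_commute le_Suc_eq)
  then show ?case
    using Suc continuous_openin_preimage_gen[OF conjunct1[OF iter_cont[OF assms(1), of "Suc N"]], of "ball (iter_comp f (Suc N) u) (1/6)"]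
    by (simp add: openin_Int)
qed

lemma nonempty_open_sub: "nonempty_open_I U \<Longrightarrow> U \<subseteq> unitI"
  unfolding nonempty_open_I_def by (metis openin_subset topspace_euclidean_subtopology)

lemma shrink:
  assumes cs: "cont_selfmap_seq f" and wm: "weakly_mixing f" and U: "nonempty_open_I U"
  shows "\<exists>n>N. \<exists>x\<in>U. \<exists>y\<in>U. \<bar>iter_comp f n x - iter_comp f n y\<bar> > 1/3"
proof -
  obtain u where u: "u \<in> U" using U unfolding nonempty_open_I_def by blast
  have uI: "u \<in> unitI" using u nonempty_open_sub[OF U] by blast
  define W where "W = U \<inter> {x\<in>unitI. \<forall>k\<le>N. \<bar>iter_comp f k x - iter_comp f k u\<bar> < 1/6}"
  have W: "nonempty_open_I W"
    unfolding nonempty_open_I_def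
  proof
    show "openin (top_of_set unitI) W" unfolding W_def
      using U openin_small[OF cs uI, of N] unfolding nonempty_open_I_def by (intro openin_Int) auto
    have "u \<in> W" unfolding W_def using u uI by simp
    then show "W \<noteq> {}" by blast
  qed
  define V1 where "V1 = unitI \<inter> {..<(1/3::real)}"
  define V2 where "V2 = unitI \<inter> {(2/3::real)<..}"
  have V1: "nonempty_open_I V1" unfolding nonempty_open_I_def V1_def
  proof
    show "openin (top_of_set unitI) (unitI \<inter> {..<(1/3::real)})" by (rule openin_open_Int) simp
    have "(0::real) \<in> unitI \<inter> {..<(1/3::real)}" by simp
    then show "unitI \<inter> {..<(1/3::real)} \<noteq> {}" by blast
  qed
  have V2: "nonempty_open_I V2" unfolding nonempty_open_I_def V2_def
  proof
    show "openin (top_of_set unitI) (unitI \<inter> {(2/3::real)<..})" by (rule openin_open_Int) simp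
    have "(1::real) \<in> unitI \<inter> {(2/3::real)<..}" by simp
    then show "unitI \<inter> {(2/3::real)<..} \<noteq> {}" by blast
  qed
  obtain n where n: "n \<ge> 1" "iter_comp f n ` W \<inter> V1 \<noteq> {}" "iter_comp f n ` W \<inter> V2 \<noteq> {}"
    using wm[unfolded weakly_mixing_def, rule_format, of W W V1 V2] W V1 V2 by blast
  obtain x where x: "x \<in> W" "iter_comp f n x < 1/3" using n(2) unfolding V1_def by auto
  obtain y where y: "y \<in> W" "iter_comp f n y > 2/3" using n(3) unfolding V2_def by auto
  have gt: "\<bar>iter_comp f n x - iter_comp f n y\<bar> > 1/3" using x y by auto
  have "n > N"
  proof (rule ccontr)
    assume "\<not> n > N"
    then have "\<bar>iter_comp f n x - iter_comp f n u\<bar> < 1/6" "\<bar>iter_comp f n y - iter_comp f n u\<bar> < 1/6"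
      using x(1) y(1) unfolding W_def by auto
    then show False using gt by linarith
  qed
  moreover have "x \<in> U" "y \<in> U" using x(1) y(1) unfolding W_def by auto
  ultimately show ?thesis using gt by blast
qed

lemma step:
  assumes per: "periodic_seq m f" and cs: "cont_selfmap_seq f" and wm: "weakly_mixing f"
    and U0: "nonempty_open_I U0" and conv: "convex U0"
    and Pr_def: "Pr = (\<lambda>r i j. j \<ge> 1 \<and> (\<exists>p\<in>{real i/6 .. (real i+1)/6}. \<exists>q\<in>{real i/6 .. (real i+1)/6}.
        \<bar>iter_comp (\<lambda>k. f (r+k)) j p - iter_comp (\<lambda>k. f (r+k)) j q\<bar> > 1/3))"
    and JJ_def: "JJ = (\<lambda>r i. if \<exists>j. Pr r i j then LEAST j. Pr r i j else 0)"
    and A_def: "A = (\<Sum>r<m. \<Sum>i<6. JJ r (i::nat))"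
    and n: "n \<in> sens_set f U0 (1/3)"
  shows "\<exists>j\<ge>1. j \<le> A \<and> n + j \<in> sens_set f U0 (1/3)"
proof -
  define F where "F = iter_comp f n"
  have U0I: "U0 \<subseteq> unitI" using nonempty_open_sub[OF U0] .
  have Fc: "continuous_on unitI F" "F ` unitI \<subseteq> unitI" using iter_cont[OF cs, of n] unfolding F_def by auto
  obtain x y where xy: "x \<in> U0" "y \<in> U0" "\<bar>F x - F y\<bar> > 1/3"
    using n unfolding sens_set_def F_def by auto
  obtain p q where pq: "p \<in> F ` U0" "q \<in> F ` U0" "q - p > 1/3"
  proof (cases "F x < F y")
    case True then show ?thesis using that[of "F x" "F y"] xy by auto
  next
    case False then show ?thesis using that[of "F y" "F x"] xy by auto
  qed
  have conn: "connected (F ` U0)"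
    using connected_continuous_image[OF continuous_on_subset[OF Fc(1) U0I] convex_connected[OF conv]] .
  have Icc: "{p..q} \<subseteq> F ` U0" using connected_contains_Icc[OF conn pq(1,2)] .
  have "p \<in> unitI" "q \<in> unitI" using pq(1,2) Fc(2) U0I by blast+
  then have p0: "p \<ge> 0" and q1: "q \<le> 1" by auto
  define i where "i = nat \<lceil>6*p\<rceil>"
  have ri: "real i = of_int \<lceil>6*p\<rceil>" unfolding i_def using p0 by simp
  have i1: "6*p \<le> real i" "real i \<le> 6*p + 1"
    using ri le_of_int_ceiling[of "6*p"] of_int_ceiling_le_add_one[of "6*p"] by auto
  define K where "K = {real i/6 .. (real i+1)/6}"
  have KF: "K \<subseteq> F ` U0" using Icc i1 pq(3) unfolding K_def by auto
  have i6: "i < 6" using i1 pq(3) q1 by linarith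
  define r where "r = n mod m"
  have m1: "m \<ge> 1" using per unfolding periodic_seq_def by simp
  have rm: "r < m" unfolding r_def using m1 by simp
  have Sh: "\<And>j. iter_comp (\<lambda>k. f (n+k)) j = iter_comp (\<lambda>k. f (r+k)) j"
    unfolding r_def using iter_shift_mod[OF per] by simp
  have comp: "\<And>j z. iter_comp f (n + j) z = iter_comp (\<lambda>k. f (r+k)) j (F z)"
    unfolding F_def using iter_add Sh by simp
  have ex: "\<exists>j. Pr r i j"
  proof -
    define c where "c = (2*real i+1)/12"
    have cK: "c \<in> {real i/6 <..< (real i+1)/6}" unfolding c_def by auto
    then have "c \<in> F ` U0" using KF unfolding K_def by auto
    then obtain z where z: "z \<in> U0" "F z = c" by auto
    define W where "W = U0 \<inter> (unitI \<inter> F -` {real i/6 <..< (real i+1)/6})"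
    have W: "nonempty_open_I W" unfolding nonempty_open_I_def
    proof
      have o1: "openin (top_of_set unitI) U0" using U0 unfolding nonempty_open_I_def by blast
      have o2: "openin (top_of_set unitI) (unitI \<inter> F -` {real i/6 <..< (real i+1)/6})"
        using continuous_openin_preimage_gen[OF Fc(1), of "{real i/6 <..< (real i+1)/6}"] by simp
      show "openin (top_of_set unitI) W" unfolding W_def by (rule openin_Int[OF o1 o2])
      have "z \<in> W" unfolding W_def using z cK U0I by auto
      then show "W \<noteq> {}" by blast
    qed
    obtain n2 x2 y2 where s: "n2 > n" "x2 \<in> W" "y2 \<in> W"
      "\<bar>iter_comp f n2 x2 - iter_comp f n2 y2\<bar> > 1/3"
      using shrink[OF cs wm W, of n] by blast
    define j where "j = n2 - n"
    have n2: "n2 = n + j" "j \<ge> 1" unfolding j_def using s(1) by auto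
    have m: "F x2 \<in> {real i/6 .. (real i+1)/6}" "F y2 \<in> {real i/6 .. (real i+1)/6}"
      using s(2,3) unfolding W_def by auto
    have "\<bar>iter_comp (\<lambda>k. f (r+k)) j (F x2) - iter_comp (\<lambda>k. f (r+k)) j (F y2)\<bar> > 1/3"
      using s(4) comp[of j] n2(1) by simp
    then have "Pr r i j" unfolding Pr_def using n2(2) m by blast
    then show ?thesis by blast
  qed
  define J where "J = JJ r i"
  have PJ: "Pr r i J" unfolding J_def JJ_def using ex LeastI_ex[OF ex] by simp
  have "J \<le> (\<Sum>i<6. JJ r (i::nat))" unfolding J_def using i6 by (intro member_le_sum) auto
  also have "\<dots> \<le> A" unfolding A_def using rm
    by (intro member_le_sum[where f="\<lambda>r. \<Sum>i<6. JJ r (i::nat)"]) auto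
  finally have JA: "J \<le> A" .
  obtain p2 q2 where w: "p2 \<in> K" "q2 \<in> K" "J \<ge> 1"
    "\<bar>iter_comp (\<lambda>k. f (r+k)) J p2 - iter_comp (\<lambda>k. f (r+k)) J q2\<bar> > 1/3"
    using PJ unfolding Pr_def K_def by blast
  obtain x3 where x3: "x3 \<in> U0" "F x3 = p2" using w(1) KF by auto
  obtain y3 where y3: "y3 \<in> U0" "F y3 = q2" using w(2) KF by auto
  have "n + J \<in> sens_set f U0 (1/3)" unfolding sens_set_def
    using x3 y3 w(4) comp by auto
  then show ?thesis using JA w(3) by blast
qed

lemma synd_U0:
  assumes per: "periodic_seq m f" and cs: "cont_selfmap_seq f" and wm: "weakly_mixing f"
    and U0: "nonempty_open_I U0" and conv: "convex U0"
  shows "syndetic (sens_set f U0 (1/3))"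
proof -
  define S where "S = sens_set f U0 (1/3)"
  define Pr where "Pr = (\<lambda>r i j. j \<ge> 1 \<and> (\<exists>p\<in>{real i/6 .. (real i+1)/6}. \<exists>q\<in>{real i/6 .. (real i+1)/6}.
        \<bar>iter_comp (\<lambda>k. f (r+k)) j p - iter_comp (\<lambda>k. f (r+k)) j q\<bar> > 1/3))"
  define JJ where "JJ = (\<lambda>r i. if \<exists>j. Pr r i j then LEAST j. Pr r i j else 0)"
  define A where "A = (\<Sum>r<m. \<Sum>i<6. JJ r (i::nat))"
  have st: "\<And>n. n \<in> S \<Longrightarrow> \<exists>j\<ge>1. j \<le> A \<and> n + j \<in> S"
    unfolding S_def using step[OF per cs wm U0 conv Pr_def JJ_def A_def] by blast
  obtain n0 where n0: "n0 \<in> S" using shrink[OF cs wm U0, of 0] unfolding S_def sens_set_def by blast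
  have "\<forall>i. {i..i+(n0+A)} \<inter> S \<noteq> {}"
  proof
    fix i0
    show "{i0..i0+(n0+A)} \<inter> S \<noteq> {}"
    proof (cases "i0 < n0")
      case True
      then have "n0 \<in> {i0..i0+(n0+A)} \<inter> S" using n0 by auto
      then show ?thesis by blast
    next
      case False
      define M where "M = Max (S \<inter> {..i0})"
      have fin: "finite (S \<inter> {..i0})" by simp
      have ne: "S \<inter> {..i0} \<noteq> {}" using False n0 by auto
      have M: "M \<in> S" "M \<le> i0" using Max_in[OF fin ne] unfolding M_def by auto
      obtain j where j: "j \<ge> 1" "j \<le> A" "M + j \<in> S" using st[OF M(1)] by blast
      have "M + j > i0"
      proof (rule ccontr)
        assume "\<not> M + j > i0"
        then have "M + j \<in> S \<inter> {..i0}" using j by auto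
        then have "M + j \<le> M" unfolding M_def using Max_ge[OF fin] by blast
        then show False using j by simp
      qed
      then have "M + j \<in> {i0..i0+(n0+A)} \<inter> S" using j M by auto
      then show ?thesis by blast
    qed
  qed
  then show ?thesis unfolding S_def syndetic_def by blast
qed

lemma synd_density:
  assumes "syndetic S"
  shows "upper_density S > 0"
proof -
  obtain a where a: "\<And>i. {i..i+a} \<inter> S \<noteq> {}" using assms unfolding syndetic_def by blast
  define b where "b = a + 1"
  have b0: "b > 0" unfolding b_def by simp
  define w where "w = (\<lambda>t. SOME s. s \<in> {t*b..t*b+a} \<inter> S)"
  have w: "\<And>t. w t \<in> {t*b..t*b+a} \<inter> S"
  proof -
    fix t
    have "\<exists>s. s \<in> {t*b..t*b+a} \<inter> S" using a[of "t*b"] by blast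
    then show "w t \<in> {t*b..t*b+a} \<inter> S" unfolding w_def by (rule someI_ex)
  qed
  have wdiv: "\<And>t. w t div b = t"
  proof -
    fix t
    have "b*t \<le> w t" "w t < b * Suc t" using w[of t] unfolding b_def by (auto simp: algebra_simps)
    then show "w t div b = t" by (rule div_nat_eqI)
  qed
  have card_k: "\<And>k. k \<le> card (S \<inter> {0..<k*b})"
  proof -
    fix k
    have "inj_on w {..<k}"
    proof (rule inj_onI)
      fix x y assume "w x = w y"
      then have "w x div b = w y div b" by simp
      then show "x = y" using wdiv by simp
    qed
    moreover have "w ` {..<k} \<subseteq> S \<inter> {0..<k*b}"
    proof
      fix s assume "s \<in> w ` {..<k}"
      then obtain t where t: "t < k" "s = w t" by auto
      have "s < (t+1)*b" using w[of t] t unfolding b_def by auto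
      also have "\<dots> \<le> k*b" using t by (intro mult_right_mono) auto
      finally show "s \<in> S \<inter> {0..<k*b}" using w[of t] t by auto
    qed
    ultimately have "card {..<k} \<le> card (S \<inter> {0..<k*b})"
      by (intro card_inj_on_le) auto
    then show "k \<le> card (S \<inter> {0..<k*b})" by simp
  qed
  have ev: "\<forall>\<^sub>F n in sequentially. ereal (1 / (2 * real b)) \<le> ereal (real (card (S \<inter> {0..<n})) / real n)"
  proof (rule eventually_sequentiallyI[of "2*b"])
    fix n assume n: "n \<ge> 2*b"
    define k where "k = n div b"
    have kb: "k * b \<le> n" unfolding k_def by (simp add: div_times_less_eq_dividend)
    have "k \<le> card (S \<inter> {0..<k*b})" by (rule card_k)
    also have "\<dots> \<le> card (S \<inter> {0..<n})"
      using kb by (intro card_mono) auto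
    finally have kc: "real k \<le> real (card (S \<inter> {0..<n}))" by simp
    have "n < b + k * b" unfolding k_def using b0 by (rule dividend_less_div_times)
    then have "real n < real b + real k * real b" by (simp flip: of_nat_mult of_nat_add)
    moreover have "real n \<ge> 2 * real b" using n by simp
    ultimately have "real n / (2 * real b) \<le> real k"
      using b0 by (simp add: field_simps) 
    then have "real n / (2 * real b) \<le> real (card (S \<inter> {0..<n}))" using kc by linarith
    then have "1 / (2 * real b) \<le> real (card (S \<inter> {0..<n})) / real n"
      using n b0 by (simp add: field_simps)
    then show "ereal (1 / (2 * real b)) \<le> ereal (real (card (S \<inter> {0..<n})) / real n)" by simp
  qed
  have "ereal (1 / (2 * real b)) \<le> upper_density S"
    unfolding upper_density_def by (rule le_Limsup[OF _ ev]) simp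
  moreover have "0 < ereal (1 / (2 * real b))" using b0 by simp
  ultimately show ?thesis by (meson less_le_trans)
qed

lemma synd_mono: "syndetic S \<Longrightarrow> S \<subseteq> T \<Longrightarrow> syndetic T"
  unfolding syndetic_def by blast

lemma synd_all:
  assumes per: "periodic_seq m f" and cs: "cont_selfmap_seq f" and wm: "weakly_mixing f"
    and U: "nonempty_open_I U"
  shows "syndetic (sens_set f U (1/3))"
proof -
  obtain u where u: "u \<in> U" using U unfolding nonempty_open_I_def by blast
  have oU: "openin (top_of_set unitI) U" using U unfolding nonempty_open_I_def by blast
  obtain e where e: "e > 0" "\<And>x'. x' \<in> unitI \<Longrightarrow> dist x' u < e \<Longrightarrow> x' \<in> U"
    using oU u unfolding openin_euclidean_subtopology_iff by meson
  define U0 where "U0 = unitI \<inter> ball u e"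
  have uI: "u \<in> unitI" using u nonempty_open_sub[OF U] by blast
  have U0: "nonempty_open_I U0" unfolding nonempty_open_I_def
  proof
    show "openin (top_of_set unitI) U0" unfolding U0_def by (rule openin_open_Int) simp
    have "u \<in> U0" unfolding U0_def using uI e(1) by simp
    then show "U0 \<noteq> {}" by blast
  qed
  have conv: "convex U0" unfolding U0_def by (intro convex_Int convex_ball) (simp add: convex_real_interval)
  have sub: "U0 \<subseteq> U" unfolding U0_def using e(2) by (auto simp: dist_commute)
  have "sens_set f U0 (1/3) \<subseteq> sens_set f U (1/3)" unfolding sens_set_def using sub by blast
  then show ?thesis using synd_U0[OF per cs wm U0 conv] synd_mono by blast
qed

theorem corollary4p3:
  fixes f :: "nat \<Rightarrow> real \<Rightarrow> real" and m :: nat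
  assumes "periodic_seq m f"
    and "cont_selfmap_seq f"
    and "weakly_mixing f"
  shows "ergodically_sensitive f \<and> syndetically_sensitive f"
proof -
  have s: "\<And>U. nonempty_open_I U \<Longrightarrow> syndetic (sens_set f U (1/3))"
    using synd_all[OF assms] by blast
  have "ergodically_sensitive f" unfolding ergodically_sensitive_def
    using s synd_density by (intro exI[of _ "1/3"]) auto
  moreover have "syndetically_sensitive f" unfolding syndetically_sensitive_def
    using s by (intro exI[of _ "1/3"]) auto
  ultimately show ?thesis by blast
qed

end
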